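(* Let $P$ be any school choice problem, where $S$ includes the null school $s_\emptyset$ and $n=|S|$. Let $i\in I$. If either (i) $i$ is assigned under $\mathrm{DA}(P)$ to his least preferred school in $S$ (the school of rank $n$ in $\succ_i$) and at least one school is under-demanded, or (ii) $\mathrm{DA}_i(P)=s_\emptyset$, then $i$ is unimprovable.
   Context: A school choice problem $P$ consists of a finite set of students $I$, a finite set of schools $S$ containing a null school $s_\emptyset$ with unlimited capacity (quota at least $|I|$), for each student $i$ a strict preference $\succ_i$ over all of $S$, and for each school $s$ a quota $q_s$ and a strict priority order $\triangleright_s$ over $I$. A matching $\mu:I\to S$ assigns at most $q_s$ students to each school $s$; a student with $\mu_i=s_\emptyset$ is unassigned. Matching $\mu$ weakly Pareto-dominates $\nu$ if every student weakly prefers $\mu_i$ to $\nu_i$; it Pareto-dominates $\nu$ if in addition some student strictly prefers $\mu_j$ to $\nu_j$; a matching is Pareto-efficient if no matching Pareto-dominates it. $\mathrm{DA}(P)$ is the matching produced by student-proposing deferred acceptance: in each round, every student not tentatively held applies to her most preferred school that has not yet rejected her; each school tentatively holds the highest-priority applicants up to its quota and rejects the rest; stop when a round has no new rejection. Let $\mathcal M(P)$ be the set of Pareto-efficient matchings that weakly Pareto-dominate $\mathrm{DA}(P)$. A student $i$ is unimprovable if $\mu_i=\mathrm{DA}_i(P)$ for every $\mu\in\mathcal M(P)$. A school $s$ is under-demanded if no student strictly prefers $s$ to her DA assignment (equivalently, $s$ rejects no student during DA). *)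

theory Defs
  imports Main
begin

text \<open>A school choice problem. pref i a b means: student i strictly prefers school a to b.
  prio s j k means: student j has strictly higher priority than k at school s.\<close>
record ('i, 's) problem =
  students :: "'i set"
  schools  :: "'s set"
  null     :: 's
  pref     :: "'i \<Rightarrow> 's \<Rightarrow> 's \<Rightarrow> bool"
  quota    :: "'s \<Rightarrow> nat"
  prio     :: "'s \<Rightarrow> 'i \<Rightarrow> 'i \<Rightarrow> bool"

definition strict_total_on :: "'a set \<Rightarrow> ('a \<Rightarrow> 'a \<Rightarrow> bool) \<Rightarrow> bool" where
  "strict_total_on A r \<longleftrightarrow>
     (\<forall>x\<in>A. \<not> r x x) \<and>
     (\<forall>x\<in>A. \<forall>y\<in>A. \<forall>z\<in>A. r x y \<longrightarrow> r y z \<longrightarrow> r x z) \<and>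
     (\<forall>x\<in>A. \<forall>y\<in>A. x \<noteq> y \<longrightarrow> r x y \<or> r y x)"

definition wf_problem :: "('i, 's) problem \<Rightarrow> bool" where
  "wf_problem P \<longleftrightarrow>
     finite (students P) \<and> finite (schools P) \<and>
     null P \<in> schools P \<and> quota P (null P) \<ge> card (students P) \<and>
     (\<forall>i\<in>students P. strict_total_on (schools P) (pref P i)) \<and>
     (\<forall>s\<in>schools P. strict_total_on (students P) (prio P s))"

definition is_matching :: "('i, 's) problem \<Rightarrow> ('i \<Rightarrow> 's) \<Rightarrow> bool" where
  "is_matching P \<mu> \<longleftrightarrow>
     (\<forall>i\<in>students P. \<mu> i \<in> schools P) \<and>
     (\<forall>s\<in>schools P. card {i\<in>students P. \<mu> i = s} \<le> quota P s)"

text \<open>State of DA: for each student, the set of schools that have rejected her so far.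
  Every student (tentatively held or not) applies to her most preferred school that has not
  rejected her; a held student thereby re-applies to the school holding her, so this is the
  standard formulation.\<close>

definition choice :: "('i, 's) problem \<Rightarrow> ('i \<Rightarrow> 's set) \<Rightarrow> 'i \<Rightarrow> 's" where
  "choice P R i = (THE s. s \<in> schools P - R i \<and>
                      (\<forall>t\<in>schools P - R i. t \<noteq> s \<longrightarrow> pref P i s t))"

definition applicants :: "('i, 's) problem \<Rightarrow> ('i \<Rightarrow> 's set) \<Rightarrow> 's \<Rightarrow> 'i set" where
  "applicants P R s = {i\<in>students P. choice P R i = s}"

definition rejected :: "('i, 's) problem \<Rightarrow> ('i \<Rightarrow> 's set) \<Rightarrow> 'i \<Rightarrow> bool" where
  "rejected P R i \<longleftrightarrow> i \<in> students P \<and>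
     (let s = choice P R i in
        card {j\<in>applicants P R s. prio P s j i} \<ge> quota P s)"

definition da_round :: "('i, 's) problem \<Rightarrow> ('i \<Rightarrow> 's set) \<Rightarrow> ('i \<Rightarrow> 's set)" where
  "da_round P R = (\<lambda>i. if rejected P R i then insert (choice P R i) (R i) else R i)"

text \<open>Each round either adds a new rejection (a student-school pair, at most
  card I * card S of them) or changes nothing (the stopping round); hence running
  card I * card S + 1 rounds reaches the terminal state, after which rounds are idle.\<close>
definition da_rejections :: "('i, 's) problem \<Rightarrow> ('i \<Rightarrow> 's set)" where
  "da_rejections P =
     (da_round P ^^ (card (students P) * card (schools P) + 1)) (\<lambda>_. {})"

definition DA :: "('i, 's) problem \<Rightarrow> 'i \<Rightarrow> 's" where
  "DA P = choice P (da_rejections P)"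

definition weakly_dominates :: "('i, 's) problem \<Rightarrow> ('i \<Rightarrow> 's) \<Rightarrow> ('i \<Rightarrow> 's) \<Rightarrow> bool" where
  "weakly_dominates P \<mu> \<nu> \<longleftrightarrow> (\<forall>i\<in>students P. \<mu> i = \<nu> i \<or> pref P i (\<mu> i) (\<nu> i))"

definition dominates :: "('i, 's) problem \<Rightarrow> ('i \<Rightarrow> 's) \<Rightarrow> ('i \<Rightarrow> 's) \<Rightarrow> bool" where
  "dominates P \<mu> \<nu> \<longleftrightarrow> weakly_dominates P \<mu> \<nu> \<and> (\<exists>j\<in>students P. pref P j (\<mu> j) (\<nu> j))"

definition pareto_efficient :: "('i, 's) problem \<Rightarrow> ('i \<Rightarrow> 's) \<Rightarrow> bool" where
  "pareto_efficient P \<mu> \<longleftrightarrow> is_matching P \<mu> \<and> \<not> (\<exists>\<nu>. is_matching P \<nu> \<and> dominates P \<nu> \<mu>)"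

definition M :: "('i, 's) problem \<Rightarrow> ('i \<Rightarrow> 's) set" where
  "M P = {\<mu>. pareto_efficient P \<mu> \<and> weakly_dominates P \<mu> (DA P)}"

definition unimprovable :: "('i, 's) problem \<Rightarrow> 'i \<Rightarrow> bool" where
  "unimprovable P i \<longleftrightarrow> (\<forall>\<mu>\<in>M P. \<mu> i = DA P i)"

definition under_demanded :: "('i, 's) problem \<Rightarrow> 's \<Rightarrow> bool" where
  "under_demanded P s \<longleftrightarrow> s \<in> schools P \<and> (\<forall>i\<in>students P. \<not> pref P i s (DA P i))"

definition least_preferred :: "('i, 's) problem \<Rightarrow> 'i \<Rightarrow> 's \<Rightarrow> bool" where
  "least_preferred P i s \<longleftrightarrow> s \<in> schools P \<and> (\<forall>t\<in>schools P. t \<noteq> s \<longrightarrow> pref P i t s)"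

end

theory Submission
  imports Defs
begin

lemma stot_sub: "strict_total_on A r \<Longrightarrow> B \<subseteq> A \<Longrightarrow> strict_total_on B r"
  unfolding strict_total_on_def by blast

lemma max_ex:
  assumes "strict_total_on A r" "finite X" "X \<noteq> {}" "X \<subseteq> A"
  shows "\<exists>x\<in>X. \<forall>y\<in>X. y \<noteq> x \<longrightarrow> r x y"
  using assms(2,3,4)
proof (induction X rule: finite_ne_induct)
  case (singleton x) thus ?case by auto
next
  case (insert a X)
  then obtain x where x: "x\<in>X" "\<forall>y\<in>X. y\<noteq>x \<longrightarrow> r x y" by auto
  have aA: "a \<in> A" and XA: "X \<subseteq> A" using insert by auto
  show ?case
  proof (cases "r a x")
    case True
    have "\<forall>y\<in>insert a X. y \<noteq> a \<longrightarrow> r a y"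
    proof (intro ballI impI)
      fix y assume y: "y \<in> insert a X" "y \<noteq> a"
      then have yX: "y \<in> X" by auto
      show "r a y"
      proof (cases "y = x")
        case True then show ?thesis using \<open>r a x\<close> by simp
      next
        case False
        then have "r x y" using x yX by auto
        then show ?thesis using \<open>r a x\<close> assms(1) aA XA x yX unfolding strict_total_on_def by blast
      qed
    qed
    then show ?thesis by blast
  next
    case False
    have "a \<noteq> x" using insert x by auto
    then have "r x a" using False assms(1) aA XA x unfolding strict_total_on_def by blast
    then have "\<forall>y\<in>insert a X. y \<noteq> x \<longrightarrow> r x y" using x by auto
    then show ?thesis using x by blast
  qed
qed

lemma top_q:
  assumes st: "strict_total_on A r" and fA: "finite A" and q: "q \<le> card A"
  shows "q \<le> card {a\<in>A. card {b\<in>A. r b a} < q}"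
proof -
  define f where "f a = card {b\<in>A. r b a}" for a
  have lt: "f a < f a'" if "a \<in> A" "a' \<in> A" "r a a'" for a a'
  proof -
    have "{b\<in>A. r b a} \<subset> {b\<in>A. r b a'}"
      using st that unfolding strict_total_on_def by blast
    then show ?thesis unfolding f_def using fA by (simp add: psubset_card_mono)
  qed
  have inj: "inj_on f A"
  proof (rule inj_onI)
    fix a a' assume "a \<in> A" "a' \<in> A" "f a = f a'"
    then show "a = a'" using lt st unfolding strict_total_on_def by (metis less_irrefl)
  qed
  have rng: "f ` A \<subseteq> {..<card A}"
  proof
    fix y assume "y \<in> f ` A"
    then obtain a where a: "a \<in> A" "y = f a" by auto
    have "{b\<in>A. r b a} \<subset> A" using a st unfolding strict_total_on_def by blast
    then show "y \<in> {..<card A}" using a fA unfolding f_def by (simp add: psubset_card_mono)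
  qed
  have "card (f ` A) = card {..<card A}" using inj by (simp add: card_image)
  then have img: "f ` A = {..<card A}" using rng by (simp add: card_subset_eq)
  have sq: "{..<q} \<subseteq> f ` {a\<in>A. f a < q}"
  proof
    fix y assume "y \<in> {..<q}"
    then have "y \<in> f ` A" using img q by auto
    then obtain a where "a \<in> A" "y = f a" by auto
    then show "y \<in> f ` {a\<in>A. f a < q}" using \<open>y \<in> {..<q}\<close> by auto
  qed
  have fq: "finite (f ` {a\<in>A. f a < q})" using fA by auto
  have "card {..<q} \<le> card (f ` {a\<in>A. f a < q})" by (rule card_mono[OF fq sq])
  then have "q \<le> card (f ` {a\<in>A. f a < q})" by simp
  also have "\<dots> \<le> card {a\<in>A. f a < q}" by (rule card_image_le) (use fA in auto)
  finally show ?thesis unfolding f_def .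
qed

lemma choice_prop:
  assumes wf: "wf_problem P" and i: "i \<in> students P" and n: "null P \<notin> R i"
  shows "choice P R i \<in> schools P - R i \<and>
         (\<forall>t\<in>schools P - R i. t \<noteq> choice P R i \<longrightarrow> pref P i (choice P R i) t)"
proof -
  have st: "strict_total_on (schools P) (pref P i)" using wf i unfolding wf_problem_def by auto
  have fin: "finite (schools P - R i)" using wf unfolding wf_problem_def by auto
  have ne: "schools P - R i \<noteq> {}" using wf n unfolding wf_problem_def by auto
  obtain x where x: "x \<in> schools P - R i" "\<forall>y\<in>schools P - R i. y \<noteq> x \<longrightarrow> pref P i x y"
    using max_ex[OF st fin ne] by blast
  have "\<exists>!s. s \<in> schools P - R i \<and> (\<forall>t\<in>schools P - R i. t \<noteq> s \<longrightarrow> pref P i s t)"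
  proof (rule ex1I[of _ x])
    show "x \<in> schools P - R i \<and> (\<forall>t\<in>schools P - R i. t \<noteq> x \<longrightarrow> pref P i x t)" using x by blast
  next
    fix s assume s: "s \<in> schools P - R i \<and> (\<forall>t\<in>schools P - R i. t \<noteq> s \<longrightarrow> pref P i s t)"
    show "s = x"
    proof (rule ccontr)
      assume "s \<noteq> x"
      then have "pref P i s x" "pref P i x s" using s x by auto
      then show False using st s x unfolding strict_total_on_def by blast
    qed
  qed
  from theI'[OF this] show ?thesis unfolding choice_def .
qed

definition inv :: "('i, 's) problem \<Rightarrow> ('i \<Rightarrow> 's set) \<Rightarrow> bool" where
  "inv P R \<longleftrightarrow> (\<forall>k. R k \<subseteq> schools P) \<and> (\<forall>k. null P \<notin> R k) \<and>
     (\<forall>s. (\<exists>k. s \<in> R k) \<longrightarrow> quota P s \<le> card (applicants P R s))"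

lemma inv_step:
  assumes wf: "wf_problem P" and inv: "inv P R"
  shows "inv P (da_round P R)"
proof -
  let ?R' = "da_round P R"
  have finI: "finite (students P)" using wf unfolding wf_problem_def by auto
  have R1: "\<And>k. R k \<subseteq> schools P" and R2: "\<And>k. null P \<notin> R k"
    and R3: "\<And>s k. s \<in> R k \<Longrightarrow> quota P s \<le> card (applicants P R s)"
    using inv unfolding inv_def by blast+
  have rejI: "\<And>k. rejected P R k \<Longrightarrow> k \<in> students P" unfolding rejected_def by auto
  have chs: "choice P R k \<in> schools P" if "k \<in> students P" for k
    using choice_prop[where R=R, OF wf that R2[of k]] by blast
  have c1: "\<forall>k. ?R' k \<subseteq> schools P"
    using R1 chs rejI unfolding da_round_def by auto
  have c2: "\<forall>k. null P \<notin> ?R' k"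
  proof (intro allI notI)
    fix k assume "null P \<in> ?R' k"
    then have rk: "rejected P R k" and ck: "choice P R k = null P"
      using R2 unfolding da_round_def by (auto split: if_splits)
    have kI: "k \<in> students P" using rk rejI by auto
    have qk: "quota P (null P) \<le> card {j\<in>applicants P R (null P). prio P (null P) j k}"
      using rk ck unfolding rejected_def Let_def by simp
    have stn: "strict_total_on (students P) (prio P (null P))"
      using wf unfolding wf_problem_def by blast
    have irr: "\<not> prio P (null P) k k" using stn kI unfolding strict_total_on_def by blast
    moreover have "{j\<in>applicants P R (null P). prio P (null P) j k} \<subseteq> students P - {k}"
      using irr unfolding applicants_def by auto
    then have "card {j\<in>applicants P R (null P). prio P (null P) j k} \<le> card (students P - {k})"
      using finI by (intro card_mono) auto
    moreover have "card (students P - {k}) < card (students P)"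
    proof -
      have "0 < card (students P)" using kI finI card_gt_0_iff by blast
      then show ?thesis using kI finI by simp
    qed
    moreover have "card (students P) \<le> quota P (null P)" using wf unfolding wf_problem_def by auto
    ultimately show False using qk by linarith
  qed
  have c3: "\<forall>s. (\<exists>k. s \<in> ?R' k) \<longrightarrow> quota P s \<le> card (applicants P ?R' s)"
  proof (intro allI impI)
    fix s assume "\<exists>k. s \<in> ?R' k"
    then obtain k where k: "s \<in> ?R' k" by blast
    have finA: "finite (applicants P R s)" using finI unfolding applicants_def by auto
    have q1: "quota P s \<le> card (applicants P R s) \<and> s \<in> schools P"
    proof (cases "s \<in> R k")
      case True then show ?thesis using R3 R1 by blast
    next
      case False
      then have rk: "rejected P R k" and ck: "choice P R k = s"
        using k unfolding da_round_def by (auto split: if_splits)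
      have "quota P s \<le> card {j\<in>applicants P R s. prio P s j k}"
        using rk ck unfolding rejected_def Let_def by simp
      also have "\<dots> \<le> card (applicants P R s)" using finA by (intro card_mono) auto
      finally show ?thesis using chs rejI rk ck by blast
    qed
    have sts: "strict_total_on (students P) (prio P s)"
      using wf q1 unfolding wf_problem_def by blast
    have "applicants P R s \<subseteq> students P" unfolding applicants_def by auto
    then have st: "strict_total_on (applicants P R s) (prio P s)"
      using sts stot_sub by blast
    have "quota P s \<le> card {a\<in>applicants P R s. card {b\<in>applicants P R s. prio P s b a} < quota P s}"
      using top_q[OF st finA] q1 by blast
    also have "\<dots> \<le> card (applicants P ?R' s)"
    proof (rule card_mono)
      show "finite (applicants P ?R' s)" using finI unfolding applicants_def by auto
    next
      show "{a\<in>applicants P R s. card {b\<in>applicants P R s. prio P s b a} < quota P s}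
            \<subseteq> applicants P ?R' s"
      proof
        fix a assume a: "a \<in> {a\<in>applicants P R s. card {b\<in>applicants P R s. prio P s b a} < quota P s}"
        then have ca: "choice P R a = s" and aI: "a \<in> students P" unfolding applicants_def by auto
        have "\<not> rejected P R a" using a ca unfolding rejected_def Let_def by auto
        then have "?R' a = R a" unfolding da_round_def by auto
        then have "choice P ?R' a = s" using ca unfolding choice_def by simp
        then show "a \<in> applicants P ?R' s" using aI unfolding applicants_def by auto
      qed
    qed
    finally show "quota P s \<le> card (applicants P ?R' s)" .
  qed
  show ?thesis using c1 c2 c3 unfolding inv_def by blast
qed

lemma inv_da:
  assumes wf: "wf_problem P"
  shows "inv P (da_rejections P)"
proof -
  have "inv P ((da_round P ^^ n) (\<lambda>_. {}))" for n
  proof (induction n)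
    case 0 show ?case unfolding inv_def by simp
  next
    case (Suc n) then show ?case using inv_step[OF wf] by simp
  qed
  then show ?thesis unfolding da_rejections_def by blast
qed

theorem proposition2:
  fixes P :: "('i, 's) problem" and i :: 'i
  assumes "wf_problem P"
    and "i \<in> students P"
    and "(least_preferred P i (DA P i) \<and> (\<exists>s. under_demanded P s)) \<or> DA P i = null P"
  shows "unimprovable P i"
proof -
  note wf = assms(1)
  have finI: "finite (students P)" and finS: "finite (schools P)" and nS: "null P \<in> schools P"
    and qn: "card (students P) \<le> quota P (null P)"
    and stp: "\<And>k. k \<in> students P \<Longrightarrow> strict_total_on (schools P) (pref P k)"
    using wf unfolding wf_problem_def by auto
  define R where "R = da_rejections P"
  have inv: "inv P R" unfolding R_def using inv_da[OF wf] .
  have DA: "\<And>k. DA P k = choice P R k" unfolding DA_def R_def by simp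
  have R2: "\<And>k. null P \<notin> R k" and R3: "\<And>s k. s \<in> R k \<Longrightarrow> quota P s \<le> card (applicants P R s)"
    using inv unfolding inv_def by blast+
  have cp: "DA P k \<in> schools P - R k \<and>
         (\<forall>t\<in>schools P - R k. t \<noteq> DA P k \<longrightarrow> pref P k (DA P k) t)" if "k \<in> students P" for k
    using choice_prop[where R=R, OF wf that R2[of k]] unfolding DA .
  define F where "F = {s\<in>schools P. \<exists>j\<in>students P. pref P j s (DA P j)}"
  have K: "quota P s \<le> card {k\<in>students P. DA P k = s}" if sF: "s \<in> F" for s
  proof -
    obtain j where j: "j \<in> students P" "pref P j s (DA P j)" "s \<in> schools P"
      using sF unfolding F_def by blast
    have "s \<in> R j"
    proof (rule ccontr)
      assume "s \<notin> R j"
      then have "s \<in> schools P - R j" using j by auto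
      moreover have "s \<noteq> DA P j" using j stp[OF j(1)] cp[OF j(1)]
        unfolding strict_total_on_def by blast
      ultimately have "pref P j (DA P j) s" using cp[OF j(1)] by blast
      then show False using j stp[OF j(1)] cp[OF j(1)] unfolding strict_total_on_def by blast
    qed
    then show ?thesis using R3 unfolding applicants_def DA by simp
  qed
  have notF: "DA P i \<notin> F"
    using assms(3)
  proof
    assume h: "least_preferred P i (DA P i) \<and> (\<exists>s. under_demanded P s)"
    then obtain s where s: "under_demanded P s" by blast
    have "s = DA P i" using h s assms(2) unfolding least_preferred_def under_demanded_def by blast
    then show ?thesis using s unfolding under_demanded_def F_def by blast
  next
    assume h: "DA P i = null P"
    show ?thesis
    proof
      assume "DA P i \<in> F"
      then have nF: "null P \<in> F" using h by simp
      then obtain j where j: "j \<in> students P" "pref P j (null P) (DA P j)"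
        unfolding F_def by blast
      have "card (students P) \<le> card {k\<in>students P. DA P k = null P}"
        using K[OF nF] qn by linarith
      then have "{k\<in>students P. DA P k = null P} = students P"
        using finI by (intro card_seteq) auto
      then have "DA P j = null P" using j by blast
      then show False using j stp[OF j(1)] nS unfolding strict_total_on_def by auto
    qed
  qed
  show ?thesis
    unfolding unimprovable_def
  proof
    fix \<mu> assume "\<mu> \<in> M P"
    then have mat: "is_matching P \<mu>" and wd: "weakly_dominates P \<mu> (DA P)"
      unfolding M_def pareto_efficient_def by auto
    define J where "J = {j\<in>students P. \<mu> j \<noteq> DA P j}"
    define D where "D = {j\<in>students P. DA P j \<in> F}"
    define E where "E = {j\<in>students P. \<mu> j \<in> F}"
    have finF: "finite F" using finS unfolding F_def by auto
    have sub: "J \<union> D \<subseteq> E"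
    proof
      fix j assume jJD: "j \<in> J \<union> D"
      then have jI: "j \<in> students P" unfolding J_def D_def by auto
      show "j \<in> E"
      proof (cases "\<mu> j = DA P j")
        case True
        then have "j \<in> D" using jJD unfolding J_def by auto
        then show ?thesis using True unfolding D_def E_def by auto
      next
        case False
        then have "pref P j (\<mu> j) (DA P j)"
          using wd jI unfolding weakly_dominates_def by auto
        moreover have "\<mu> j \<in> schools P" using mat jI unfolding is_matching_def by auto
        ultimately show ?thesis using jI unfolding E_def F_def by blast
      qed
    qed
    have cnt: "card {j\<in>students P. g j \<in> F} = (\<Sum>s\<in>F. card {j\<in>students P. g j = s})" for g :: "'i \<Rightarrow> 's"
    proof -
      have "{j\<in>students P. g j \<in> F} = (\<Union>s\<in>F. {j\<in>students P. g j = s})" by auto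
      moreover have "card (\<Union>s\<in>F. {j\<in>students P. g j = s}) = (\<Sum>s\<in>F. card {j\<in>students P. g j = s})"
        by (rule card_UN_disjoint) (use finF finI in auto)
      ultimately show ?thesis by simp
    qed
    have "card E = (\<Sum>s\<in>F. card {j\<in>students P. \<mu> j = s})" unfolding E_def by (rule cnt)
    also have "\<dots> \<le> (\<Sum>s\<in>F. quota P s)"
      using mat unfolding is_matching_def F_def by (intro sum_mono) auto
    also have "\<dots> \<le> (\<Sum>s\<in>F. card {j\<in>students P. DA P j = s})"
      using K by (intro sum_mono) auto
    also have "\<dots> = card D" unfolding D_def by (rule cnt[symmetric])
    finally have "card E \<le> card D" .
    moreover have "card (J \<union> D) \<le> card E" using sub finI unfolding E_def by (intro card_mono) auto
    ultimately have "D = J \<union> D"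
      using finI unfolding D_def J_def by (intro card_seteq) auto
    then have "i \<notin> J" using notF unfolding D_def by blast
    then show "\<mu> i = DA P i" using assms(2) unfolding J_def by blast
  qed
qed

end
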